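(* Let $n\ge 2$, let $a_1,\dots,a_n$ be positive integers, let $b\ge 0$ be an integer, and let $M$ be the least common multiple of $a_1,\dots,a_n$. Let $b'=\lfloor b/M\rfloor$ and let $r$ be the remainder of $b$ modulo $M$ (so $0\le r<M$ and $b=b'M+r$). For an integer $c$, let $P'(c)$ denote the number of $n$-tuples $(t_1,\dots,t_n)$ of integers satisfying $$\sum_{j=1}^n a_jt_j=c,\qquad 0\le t_j\le \frac{M}{a_j}-1\quad (j=1,\dots,n),$$ and set $l_i=P'(r+(i-1)M)$ for $i=1,\dots,n$. Let $P(b)$ be the number of $n$-tuples $(x_1,\dots,x_n)$ of non-negative integers with $\sum_{i=1}^n a_ix_i=b$. Then $$P(b)=\sum_{i=1}^n l_i\, C(b'+2-i;\,n-1).$$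
   Context: For a real number $k$ and a non-negative integer $l$, define $C(k;l)=\frac{1}{l!}\,k(k+1)\cdots(k+l-1)$ if $k$ is a positive integer (natural number), and $C(k;l)=0$ otherwise (in particular $C(k;l)=0$ whenever $k$ is not an integer or $k\le 0$). *)

theory Defs
  imports Complex_Main "HOL-Library.FuncSet"
begin

definition Ccoef :: "real \<Rightarrow> nat \<Rightarrow> real" where
  "Ccoef k l = (if k \<in> \<int> \<and> k > 0 then pochhammer k l / fact l else 0)"

definition Pprime :: "nat \<Rightarrow> (nat \<Rightarrow> nat) \<Rightarrow> int \<Rightarrow> nat" where
  "Pprime n a c = card {t \<in> {..<n} \<rightarrow>\<^sub>E (UNIV :: int set).
      (\<Sum>j<n. int (a j) * t j) = c \<and>
      (\<forall>j<n. 0 \<le> t j \<and> t j \<le> int (Lcm (a ` {..<n}) div a j) - 1)}"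

definition Pcount :: "nat \<Rightarrow> (nat \<Rightarrow> nat) \<Rightarrow> nat \<Rightarrow> nat" where
  "Pcount n a b = card {x \<in> {..<n} \<rightarrow>\<^sub>E (UNIV :: nat set). (\<Sum>i<n. a i * x i) = b}"

end

theory Submission
  imports Defs
begin

lemma card_comp:
  "card {s \<in> {..<n} \<rightarrow>\<^sub>E (UNIV::nat set). (\<Sum>j<n. s j) = N} = (N + n - 1) choose N"
proof -
  have "bij_betw (\<lambda>l. (\<lambda>j\<in>{..<n}. l ! j)) {l::nat list. size l = n \<and> sum_list l = N}
          {s \<in> {..<n} \<rightarrow>\<^sub>E (UNIV::nat set). (\<Sum>j<n. s j) = N}"
  proof (rule bij_betw_byWitness[where f' = "\<lambda>s. map s [0..<n]"])
    show "\<forall>l\<in>{l::nat list. size l = n \<and> sum_list l = N}. map (\<lambda>j\<in>{..<n}. l ! j) [0..<n] = l"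
      by (auto intro!: nth_equalityI)
    show "\<forall>s\<in>{s \<in> {..<n} \<rightarrow>\<^sub>E (UNIV::nat set). (\<Sum>j<n. s j) = N}. (\<lambda>j\<in>{..<n}. map s [0..<n] ! j) = s"
      by (auto simp: PiE_def extensional_def fun_eq_iff)
    show "(\<lambda>l. \<lambda>j\<in>{..<n}. l ! j) ` {l. length l = n \<and> sum_list l = N} \<subseteq> {s \<in> {..<n} \<rightarrow>\<^sub>E UNIV. sum s {..<n} = N}"
      by (intro image_subsetI) (clarsimp simp: sum_list_sum_nth atLeast0LessThan)
    show "(\<lambda>s. map s [0..<n]) ` {s \<in> {..<n} \<rightarrow>\<^sub>E UNIV. sum s {..<n} = N} \<subseteq> {l. length l = n \<and> sum_list l = N}"
      by (intro image_subsetI) (simp add: interv_sum_list_conv_sum_set_nat atLeast0LessThan)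
  qed
  from bij_betw_same_card[OF this] show ?thesis using card_length_sum_list[of n N] by simp
qed

lemma Ccoef_nat: "Ccoef (real m + 1) k = real ((m + k) choose k)"
proof -
  have "real m + 1 \<in> \<int>" by (metis Ints_1 Ints_add Ints_of_nat)
  then have "Ccoef (real m + 1) k = pochhammer (real m + 1) k / fact k"
    by (simp add: Ccoef_def add_pos_nonneg)
  also have "\<dots> = (real (m+k) gchoose k)"
    by (simp add: gbinomial_pochhammer')
  also have "\<dots> = real ((m + k) choose k)" by (simp add: binomial_gbinomial)
  finally show ?thesis .
qed

lemma Ccoef_nonpos: "k \<le> 0 \<Longrightarrow> Ccoef k l = 0"
  by (simp add: Ccoef_def)


theorem mainTheorem3:
  fixes n :: nat and a :: "nat \<Rightarrow> nat" and b :: nat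
  assumes "n \<ge> 2"
    and "\<forall>i<n. a i > 0"
  defines "M \<equiv> Lcm (a ` {..<n})"
  defines "b' \<equiv> b div M"
  defines "r \<equiv> b mod M"
  defines "l \<equiv> (\<lambda>i::nat. Pprime n a (int r + (int i - 1) * int M))"
  shows "real (Pcount n a b) =
           (\<Sum>i=1..n. real (l i) * Ccoef (real b' + 2 - real i) (n - 1))"
proof -
  have apos: "\<And>j. j<n \<Longrightarrow> a j > 0" using assms(2) by auto
  have Mpos: "M > 0" unfolding M_def using apos by (subst neq0_conv[symmetric], subst Lcm_0_iff) force+
  define d where "d j = M div a j" for j
  have ad: "a j * d j = M" if "j<n" for j
    unfolding d_def M_def using that by (simp add: dvd_Lcm)
  have dpos: "d j > 0" if "j<n" for j
    using ad[OF that] Mpos by (metis gr0I mult_0_right)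
  have rM: "r < M" unfolding r_def using Mpos by simp
  define X where "X = {x \<in> {..<n} \<rightarrow>\<^sub>E (UNIV :: nat set). (\<Sum>i<n. a i * x i) = b}"
  define T where "T i = {t \<in> {..<n} \<rightarrow>\<^sub>E (UNIV :: int set). (\<Sum>j<n. int (a j) * t j) = int r + (int i - 1) * int M \<and> (\<forall>j<n. 0 \<le> t j \<and> t j \<le> int (d j) - 1)}" for i
  have lT: "l i = card (T i)" for i by (simp add: l_def Pprime_def T_def M_def d_def)
  define S where "S i = {s \<in> {..<n} \<rightarrow>\<^sub>E (UNIV::nat set). (\<Sum>j<n. s j) = b' + 1 - i \<and> i \<le> b' + 1}" for i
  define Y where "Y = Sigma {1..n} (\<lambda>i. T i \<times> S i)"
  define f where "f x = ((\<Sum>j<n. a j * (x j mod d j)) div M + 1, (\<lambda>j\<in>{..<n}. int (x j mod d j)), (\<lambda>j\<in>{..<n}. x j div d j))" for x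
  define g where "g = (\<lambda>(i::nat, t::nat\<Rightarrow>int, s::nat\<Rightarrow>nat). (\<lambda>j\<in>{..<n}. nat (t j) + d j * s j))"
  have "bij_betw f X Y"
  proof (rule bij_betw_byWitness[where f' = g])
    show "\<forall>x\<in>X. g (f x) = x"
      by (auto simp: X_def f_def g_def PiE_def extensional_def fun_eq_iff)
    show "\<forall>y\<in>Y. f (g y) = y"
    proof
      fix y assume "y \<in> Y"
      then obtain i t s where y: "y = (i,t,s)" "i \<in> {1..n}" "t \<in> T i" "s \<in> S i"
        unfolding Y_def by auto
      have tl: "nat (t j) < d j" if "j < n" for j using y(3) that unfolding T_def by auto
      have md: "(nat (t j) + d j * s j) mod d j = nat (t j)" "(nat (t j) + d j * s j) div d j = s j" if "j < n" for j
        using tl[OF that] dpos[OF that] by auto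
      have c: "int (\<Sum>j<n. a j * nat (t j)) = int r + (int i - 1) * int M"
        using y(3) unfolding T_def by (auto simp: of_nat_sum intro!: sum.cong)
      have c2: "(\<Sum>j<n. a j * nat (t j)) = r + (i - 1) * M"
      proof -
        have "int (r + (i-1)*M) = int r + (int i - 1)*int M" using y(2) by (simp add: of_nat_diff)
        then show ?thesis using c by linarith
      qed
      have "(\<Sum>j<n. a j * ((\<lambda>j\<in>{..<n}. nat (t j) + d j * s j) j mod d j)) = (\<Sum>j<n. a j * nat (t j))"
        by (intro sum.cong refl) (simp add: tl)
      then have "(\<Sum>j<n. a j * ((\<lambda>j\<in>{..<n}. nat (t j) + d j * s j) j mod d j)) div M + 1 = i"
        using c2 rM y(2) by simp
      moreover have "(\<lambda>j\<in>{..<n}. int ((\<lambda>j\<in>{..<n}. nat (t j) + d j * s j) j mod d j)) = t"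
        using y(3) unfolding T_def by (auto simp: md fun_eq_iff PiE_def extensional_def)
      moreover have "(\<lambda>j\<in>{..<n}. (\<lambda>j\<in>{..<n}. nat (t j) + d j * s j) j div d j) = s"
        using y(4) unfolding S_def by (auto simp: md fun_eq_iff PiE_def extensional_def)
      ultimately show "f (g y) = y" unfolding f_def g_def y(1) by simp
    qed
    show "f ` X \<subseteq> Y"
    proof
      fix z assume "z \<in> f ` X"
      then obtain x where x: "x \<in> X" "z = f x" by auto
      define c where "c = (\<Sum>j<n. a j * (x j mod d j))"
      define SS where "SS = (\<Sum>j<n. x j div d j)"
      have "b = (\<Sum>j<n. a j * x j)"
        using x(1) unfolding X_def by simp
      also have "\<dots> = c + M * SS"
        unfolding c_def SS_def sum_distrib_left sum.distrib[symmetric]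
      proof (intro sum.cong refl)
        fix j assume "j \<in> {..<n}"
        then have j: "j < n" by simp
        have "a j * x j = a j * (x j mod d j + d j * (x j div d j))" by simp
        also have "\<dots> = a j * (x j mod d j) + (a j * d j) * (x j div d j)"
          by (simp only: distrib_left mult.assoc)
        finally show "a j * x j = a j * (x j mod d j) + M * (x j div d j)" using ad[OF j] by simp
      qed
      finally have bc: "b = c + M * SS" .
      have "c \<le> (\<Sum>j<n. M - 1)"
        unfolding c_def
      proof (rule sum_mono)
        fix j assume "j \<in> {..<n}"
        then have j: "j < n" by simp
        have "x j mod d j \<le> d j - 1" using dpos[OF j]
          by (metis Suc_pred' less_Suc_eq_le mod_less_divisor)
        then have "a j * (x j mod d j) \<le> a j * (d j - 1)" by simp
        also have "\<dots> \<le> M - 1" using ad[OF j] apos[OF j] by (simp add: right_diff_distrib')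
        finally show "a j * (x j mod d j) \<le> M - 1" .
      qed
      then have "c \<le> n * (M - 1)" by simp
      then have cn: "c < n * M" using Mpos assms(1)
        by (metis Suc_pred' diff_le_self dual_order.strict_trans1 le_neq_implies_less less_Suc_eq mult_le_mono2 mult_less_cancel1 not_numeral_le_zero zero_less_diff)
      have cmod: "c mod M = r" unfolding r_def bc by simp
      have cdiv: "c div M < n" using cn by (simp add: div_less_iff_less_mult Mpos)
      have bdiv: "b' = c div M + SS" unfolding b'_def bc using Mpos by simp
      have cc: "c = r + (c div M) * M" using cmod by (metis div_mult_mod_eq add.commute)
      have "(\<lambda>j\<in>{..<n}. int (x j mod d j)) \<in> T (c div M + 1)"
        unfolding T_def
      proof (intro CollectI conjI allI impI)
        show "(\<lambda>j\<in>{..<n}. int (x j mod d j)) \<in> {..<n} \<rightarrow>\<^sub>E UNIV" by simp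
        have "(\<Sum>j<n. int (a j) * (\<lambda>j\<in>{..<n}. int (x j mod d j)) j) = int c"
          unfolding c_def of_nat_sum by (rule sum.cong) simp_all
        also have "\<dots> = int r + (int (c div M + 1) - 1) * int M"
          using cc by (metis add_diff_cancel_right' of_nat_1 of_nat_add of_nat_mult)
        finally show "(\<Sum>j<n. int (a j) * (\<lambda>j\<in>{..<n}. int (x j mod d j)) j) = int r + (int (c div M + 1) - 1) * int M" .
        fix j assume j: "j < n"
        show "0 \<le> (\<lambda>j\<in>{..<n}. int (x j mod d j)) j" using j by simp
        show "(\<lambda>j\<in>{..<n}. int (x j mod d j)) j \<le> int (d j) - 1"
          using j dpos[OF j] by (simp add: int_ops(6))
      qed
      moreover have "(\<lambda>j\<in>{..<n}. x j div d j) \<in> S (c div M + 1)"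
        unfolding S_def using bdiv SS_def by auto
      ultimately show "z \<in> Y" unfolding Y_def x(2) f_def c_def[symmetric] using cdiv by auto
    qed
    show "g ` Y \<subseteq> X"
    proof
      fix z assume "z \<in> g ` Y"
      then obtain i t s where y: "z = g (i,t,s)" "i \<in> {1..n}" "t \<in> T i" "s \<in> S i"
        unfolding Y_def by auto
      have c: "int (\<Sum>j<n. a j * nat (t j)) = int r + (int i - 1) * int M"
        using y(3) unfolding T_def by (auto simp: of_nat_sum intro!: sum.cong)
      have c2: "(\<Sum>j<n. a j * nat (t j)) = r + (i - 1) * M"
      proof -
        have "int (r + (i-1)*M) = int r + (int i - 1)*int M" using y(2) by (simp add: of_nat_diff)
        then show ?thesis using c by linarith
      qed
      have ss: "(\<Sum>j<n. s j) = b' + 1 - i" "i \<le> b' + 1" using y(4) unfolding S_def by auto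
      have "(\<Sum>j<n. a j * (\<lambda>j\<in>{..<n}. nat (t j) + d j * s j) j) = (\<Sum>j<n. a j * nat (t j)) + M * (\<Sum>j<n. s j)"
        unfolding sum_distrib_left sum.distrib[symmetric]
        by (rule sum.cong) (simp_all add: algebra_simps ad[symmetric])
      also have "\<dots> = r + M * ((i - 1) + (b' + 1 - i))" unfolding c2 ss by (simp add: algebra_simps)
      also have "\<dots> = r + M * b'" using ss(2) y(2) by simp
      also have "\<dots> = b" unfolding r_def b'_def by simp
      finally show "z \<in> X" unfolding X_def y(1) g_def by simp
    qed
  qed
  then have cXY: "card X = card Y" by (rule bij_betw_same_card)
  have finT: "finite (T i)" for i
  proof (rule finite_subset)
    show "T i \<subseteq> PiE {..<n} (\<lambda>j. {0..int (d j) - 1})" unfolding T_def by auto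
  qed (simp add: finite_PiE)
  have finS: "finite (S i)" for i
  proof (rule finite_subset)
    show "S i \<subseteq> PiE {..<n} (\<lambda>j. {..b' + 1})" unfolding S_def
    proof (auto simp: PiE_def Pi_def)
      fix s j assume "(\<Sum>j<n. s j) = Suc b' - i" "j < n"
      then show "s j \<le> Suc b'"
        by (metis diff_le_self finite_lessThan lessThan_iff member_le_sum order_trans zero_le)
    qed
  qed (simp add: finite_PiE)
  have cS: "real (card (S i)) = Ccoef (real b' + 2 - real i) (n - 1)" for i
  proof (cases "i \<le> b' + 1")
    case True
    define m where "m = b' + 1 - i"
    have "S i = {s \<in> {..<n} \<rightarrow>\<^sub>E (UNIV::nat set). (\<Sum>j<n. s j) = m}"
      unfolding S_def m_def using True by auto
    then have "card (S i) = (m + n - 1) choose m" by (simp add: card_comp)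
    also have "\<dots> = (m + (n - 1)) choose (n - 1)"
      using assms(1) by (metis Nat.add_diff_assoc add.commute binomial_symmetric le_add1 diff_add_inverse2 one_le_numeral order_trans)
    finally have "real (card (S i)) = real ((m + (n - 1)) choose (n - 1))" by simp
    also have "\<dots> = Ccoef (real m + 1) (n - 1)" by (simp add: Ccoef_nat)
    also have "real m + 1 = real b' + 2 - real i" unfolding m_def using True by (simp add: of_nat_diff)
    finally show ?thesis .
  next
    case False
    then have "S i = {}" unfolding S_def by auto
    moreover have "real b' + 2 - real i \<le> 0" using False by simp
    ultimately show ?thesis by (simp add: Ccoef_nonpos)
  qed
  have "card Y = (\<Sum>i\<in>{1..n}. card (T i) * card (S i))"
    unfolding Y_def using finT finS by (simp add: card_cartesian_product)
  then have "real (card X) = (\<Sum>i=1..n. real (l i) * real (card (S i)))"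
    using cXY lT by simp
  also have "\<dots> = (\<Sum>i=1..n. real (l i) * Ccoef (real b' + 2 - real i) (n - 1))"
    using cS by simp
  finally show ?thesis unfolding Pcount_def X_def .
qed

end
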